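(* Let $\Gamma<H$ be a cocompact discrete subgroup of the three-dimensional Heisenberg group $H$ (with metric parameter $A>0$ and magnetic parameter $B\in\mathbb R$ as in the context), let $E>0$, and let $\gamma=\exp(V_\gamma+z_\gamma Z)\in\Gamma$ with $V_\gamma\in\mathrm{span}\{X,Y\}$ and $z_\gamma\in\mathbb R$. (1) If $\gamma=e$ (i.e. $V_\gamma=0$, $z_\gamma=0$), then $L(e;E)=\emptyset$ if $E\ge|B|$, and $L(e;E)=\left\{\frac{2\pi A}{\sqrt{B^2/E^2-1}}\right\}$ if $0<E<|B|$. (2) If $V_\gamma\neq0$, then $L(\gamma;E)=\emptyset$ if $0<E\le|B|$, and $L(\gamma;E)=\left\{\frac{|V_\gamma|}{\sqrt{1-B^2/E^2}}\right\}$ if $E>|B|$, where $|V_\gamma|$ is the norm with respect to $g$. (3) If $V_\gamma=0$ and $z_\gamma\neq0$, then: if $E>|B|$, $L(\gamma;E)=\left\{\frac{\sqrt{4\pi A\ell(z_\gamma-\pi A\ell)}}{\sqrt{1-B^2/E^2}}:\ell\in\mathbb Z\setminus\{0\},\ \frac{2E}{E+|B|}<\frac{z_\gamma}{\pi A\ell}\right\}\cup\{|z_\gamma|\}$; if $0<E<|B|$, $L(\gamma;E)=\left\{\frac{\sqrt{4\pi A\ell(\pi A\ell-z_\gamma)}}{\sqrt{B^2/E^2-1}}:\ell\in\mathbb Z\setminus\{0\},\ \frac{2E}{E-|B|}<\frac{z_\gamma}{\pi A\ell}<\frac{2E}{E+|B|}\right\}\cup\{|z_\gamma|\}$; if $E=|B|$,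 $L(\gamma;E)=S\cup\{|z_\gamma|\}$, where $S=\left\{\frac{2E|z_\gamma|}{|z_0|}:z_0\in\mathbb R,\ (z_0+B)^2<E^2\right\}$ if $z_\gamma/(\pi A)\in\mathbb Z$, and $S=\emptyset$ otherwise.
   Context: Let $\mathfrak h$ be the real Lie algebra with basis $X,Y,Z$ whose only nonzero bracket among basis vectors is $[X,Y]=Z$, and $H$ the simply connected Lie group with Lie algebra $\mathfrak h$ (three-dimensional Heisenberg group); $\exp:\mathfrak h\to H$ is a diffeomorphism with $\exp(U)\exp(V)=\exp(U+V+\tfrac12[U,V])$. Fix $A>0$ and let $g$ be the left-invariant Riemannian metric for which $\{X/\sqrt A,\,Y/\sqrt A,\,Z\}$ is orthonormal. Let $\{\alpha,\beta,\zeta\}$ be the dual basis, fix $B\in\mathbb R$ and let $\Omega=d(B\zeta)=-B\,\alpha\wedge\beta$ be the (left-invariant, exact) magnetic form. A magnetic geodesic is a curve $\sigma$ with $\nabla_{\sigma'}\sigma'=F\sigma'$, $\nabla$ the Levi-Civita connection and $F$ the Lorentz force defined by $g(Fu,v)=\Omega(u,v)$. The magnetic geodesics with $\sigma(0)=e$ are exactly the curves $\sigma(t)=\exp(x(t)X+y(t)Y+z(t)Z)$ where, for parameters $(u_0,v_0,z_0)\in\mathbb R^3$: if $z_0\neq0$, $x(t)=\frac{u_0}{z_0}\sin(\frac{z_0t}{A})-\frac{v_0}{z_0}(1-\cos(\frac{z_0t}{A}))$, $y(t)=\frac{u_0}{z_0}(1-\cos(\frac{z_0t}{A}))+\frac{v_0}{z_0}\sin(\frac{z_0t}{A})$,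 $z(t)=(z_0+B+\frac{u_0^2+v_0^2}{2Az_0})t-\frac{u_0^2+v_0^2}{2z_0^2}\sin(\frac{z_0t}{A})$; if $z_0=0$, $x(t)=u_0t/A$, $y(t)=v_0t/A$, $z(t)=Bt$. All magnetic geodesics are left translates of these. The energy $E=|\sigma'|$ is constant, $E^2=(u_0^2+v_0^2)/A+(z_0+B)^2$. For $\gamma\in H\setminus\{e\}$, $\sigma$ is $\gamma$-periodic with period $\omega\neq0$ if $\gamma\sigma(t)=\sigma(t+\omega)$ for all $t$. For a cocompact discrete $\Gamma<H$, $\Gamma\backslash H$ carries the induced metric and magnetic form; closed magnetic geodesics of $\Gamma\backslash H$ in the free homotopy class of $\gamma\in\Gamma\setminus\{e\}$ are the projections of $\gamma$-periodic magnetic geodesics of $H$, and such a projection has length $E|\omega|$; for the trivial class they are projections of magnetic geodesics periodic in $H$ ($\sigma(t+\omega)=\sigma(t)$), with length $E\omega$, $\omega$ the least positive period. $L(\gamma;E)$ denotes the set of distinct lengths of closed magnetic geodesics of energy $E$ in the free homotopy class of $\gamma$. *)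

theory Defs
  imports "HOL-Analysis.Analysis"
begin

text \<open>The Heisenberg group H is modelled in exponential coordinates:
  the triple (x,y,z) stands for exp(xX + yY + zZ).  By the BCH formula
  exp(U)exp(V) = exp(U + V + [U,V]/2) with [X,Y] = Z the group law is\<close>

type_synonym heis = "real \<times> real \<times> real"

definition hmul :: "heis \<Rightarrow> heis \<Rightarrow> heis" where
  "hmul p q = (case p of (x, y, z) \<Rightarrow> case q of (x', y', z') \<Rightarrow>
      (x + x', y + y', z + z' + (x * y' - y * x') / 2))"

definition hunit :: heis where "hunit = (0, 0, 0)"

definition hinv :: "heis \<Rightarrow> heis" where
  "hinv p = (case p of (x, y, z) \<Rightarrow> (- x, - y, - z))"

text \<open>Cocompact discrete subgroups (the topology of H is that of R^3 via exp).\<close>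

definition cocompact_discrete_subgroup :: "heis set \<Rightarrow> bool" where
  "cocompact_discrete_subgroup G \<longleftrightarrow>
     hunit \<in> G \<and> (\<forall>p\<in>G. \<forall>q\<in>G. hmul p q \<in> G) \<and> (\<forall>p\<in>G. hinv p \<in> G) \<and>
     (\<exists>\<epsilon>>0. G \<inter> ball hunit \<epsilon> = {hunit}) \<and>
     (\<exists>K. compact K \<and> (\<forall>p. \<exists>g\<in>G. \<exists>k\<in>K. p = hmul g k))"

definition mgeo0 :: "real \<Rightarrow> real \<Rightarrow> real \<Rightarrow> real \<Rightarrow> real \<Rightarrow> real \<Rightarrow> heis" where
  "mgeo0 A B u0 v0 z0 t =
    (if z0 \<noteq> 0 then
       (u0 / z0 * sin (z0 * t / A) - v0 / z0 * (1 - cos (z0 * t / A)),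
        u0 / z0 * (1 - cos (z0 * t / A)) + v0 / z0 * sin (z0 * t / A),
        (z0 + B + (u0\<^sup>2 + v0\<^sup>2) / (2 * A * z0)) * t
          - (u0\<^sup>2 + v0\<^sup>2) / (2 * z0\<^sup>2) * sin (z0 * t / A))
     else (u0 * t / A, v0 * t / A, B * t))"

definition magnetic_geodesic :: "real \<Rightarrow> real \<Rightarrow> (real \<Rightarrow> heis) \<Rightarrow> bool" where
  "magnetic_geodesic A B \<sigma> \<longleftrightarrow>
     (\<exists>h u0 v0 z0. \<forall>t. \<sigma> t = hmul h (mgeo0 A B u0 v0 z0 t))"

text \<open>Speed |\<sigma>'(t)| for the left-invariant metric with {X/sqrt A, Y/sqrt A, Z} orthonormal.
  The velocity left-translated to e is x'X + y'Y + (z' - (x y' - y x')/2) Z.\<close>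

definition hspeed :: "real \<Rightarrow> (real \<Rightarrow> heis) \<Rightarrow> real \<Rightarrow> real" where
  "hspeed A \<sigma> t = (case \<sigma> t of (x, y, z) \<Rightarrow>
     case vector_derivative \<sigma> (at t) of (x', y', z') \<Rightarrow>
       sqrt (A * (x'\<^sup>2 + y'\<^sup>2) + (z' - (x * y' - y * x') / 2)\<^sup>2))"

definition has_energy :: "real \<Rightarrow> (real \<Rightarrow> heis) \<Rightarrow> real \<Rightarrow> bool" where
  "has_energy A \<sigma> E \<longleftrightarrow> (\<forall>t. \<sigma> differentiable (at t) \<and> hspeed A \<sigma> t = E)"

text \<open>L(\<gamma>;E): the set of lengths of closed magnetic geodesics of energy E in the free
  homotopy class of \<gamma> in the quotient (computed via lifts, as in the context).\<close>

definition Lset :: "real \<Rightarrow> real \<Rightarrow> heis \<Rightarrow> real \<Rightarrow> real set" where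
  "Lset A B \<gamma> E =
    (if \<gamma> = hunit then
       {E * \<omega> | \<sigma> \<omega>. magnetic_geodesic A B \<sigma> \<and> has_energy A \<sigma> E \<and> \<omega> > 0 \<and>
          (\<forall>t. \<sigma> (t + \<omega>) = \<sigma> t) \<and>
          (\<forall>\<omega>'. 0 < \<omega>' \<and> \<omega>' < \<omega> \<longrightarrow> \<not> (\<forall>t. \<sigma> (t + \<omega>') = \<sigma> t))}
     else
       {E * \<bar>\<omega>\<bar> | \<sigma> \<omega>. magnetic_geodesic A B \<sigma> \<and> has_energy A \<sigma> E \<and> \<omega> \<noteq> 0 \<and>
          (\<forall>t. hmul \<gamma> (\<sigma> t) = \<sigma> (t + \<omega>))})"

end

theory Submission
  imports Defs
begin


lemma speed_gen:
  assumes X: "(X has_real_derivative X') (at t)" and Y: "(Y has_real_derivative Y') (at t)"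
    and Z: "(Z has_real_derivative Z') (at t)"
    and s: "\<sigma> = (\<lambda>t. hmul (p,q,r) (X t, Y t, Z t))"
  shows "\<sigma> differentiable (at t)"
    "hspeed A \<sigma> t = sqrt (A*(X'^2+Y'^2) + (Z' - (X t * Y' - Y t * X')/2)^2)"
proof -
  have e: "\<sigma> = (\<lambda>t. (p + X t, q + Y t, r + Z t + (p * Y t - q * X t)/2))"
    unfolding s hmul_def by auto
  have D: "(\<sigma> has_vector_derivative (X', Y', Z' + (p * Y' - q * X')/2)) (at t)"
    unfolding e using X Y Z
    by (auto intro!: derivative_eq_intros has_vector_derivative_Pair
        simp: has_real_derivative_iff_has_vector_derivative[symmetric])
  then show "\<sigma> differentiable (at t)" using differentiableI_vector by blast
  have v: "vector_derivative \<sigma> (at t) = (X', Y', Z' + (p * Y' - q * X')/2)"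
    using D vector_derivative_at by blast
  show "hspeed A \<sigma> t = sqrt (A*(X'^2+Y'^2) + (Z' - (X t * Y' - Y t * X')/2)^2)"
  proof -
    have i: "Z' + (p * Y' - q * X')/2 - ((p + X t) * Y' - (q + Y t) * X')/2 = Z' - (X t * Y' - Y t * X')/2"
      by (simp add: field_simps)
    show ?thesis unfolding hspeed_def v unfolding e prod.case i by (rule refl)
  qed
qed

lemma alg1:
  fixes s c :: real assumes sc: "s^2 + c^2 = 1" and z: "z0 \<noteq> 0" and A: "A \<noteq> 0"
  shows "(u0 / z0 * s - v0 / z0 * (1 - c)) * ((u0 * s + v0 * c) / A)
       - (u0 / z0 * (1 - c) + v0 / z0 * s) * ((u0 * c - v0 * s) / A)
       = (u0^2+v0^2) * (1 - c) / (A * z0)"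
proof -
  have "(u0 / z0 * s - v0 / z0 * (1 - c)) * ((u0 * s + v0 * c) / A)
       - (u0 / z0 * (1 - c) + v0 / z0 * s) * ((u0 * c - v0 * s) / A)
       = (u0^2+v0^2) * ((s^2 + c^2) - c) / (A * z0)"
    using z A by (simp add: field_simps power2_eq_square)
  then show ?thesis using sc by simp
qed

lemma alg2:
  fixes s c :: real assumes sc: "s^2 + c^2 = 1" and A: "A > 0"
  shows "A * (((u0 * c - v0 * s) / A)^2 + ((u0 * s + v0 * c) / A)^2) = (u0^2+v0^2)/A"
proof -
  have "A * (((u0 * c - v0 * s) / A)^2 + ((u0 * s + v0 * c) / A)^2) = (u0^2+v0^2)*(s^2+c^2)/A"
    using A by (simp add: field_simps power2_eq_square)
  then show ?thesis using sc by simp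
qed

lemma mgeo_energy:
  assumes A: "A > 0" and s: "\<sigma> = (\<lambda>t. hmul h (mgeo0 A B u0 v0 z0 t))"
  shows "\<sigma> differentiable (at t) \<and> hspeed A \<sigma> t = sqrt ((u0^2+v0^2)/A + (z0+B)^2)"
proof (cases "z0 = 0")
  case True
  obtain p q r where h: "h = (p,q,r)" by (cases h) auto
  have s': "\<sigma> = (\<lambda>t. hmul (p,q,r) ((\<lambda>t. u0 * t / A) t, (\<lambda>t. v0 * t / A) t, (\<lambda>t. B * t) t))"
    unfolding s h mgeo0_def using True by simp
  have X: "((\<lambda>t. u0 * t / A) has_real_derivative u0 / A) (at t)"
    using A by (auto intro!: derivative_eq_intros)
  have Y: "((\<lambda>t. v0 * t / A) has_real_derivative v0 / A) (at t)"
    using A by (auto intro!: derivative_eq_intros)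
  have Z: "((\<lambda>t. B * t) has_real_derivative B) (at t)"
    by (auto intro!: derivative_eq_intros)
  have "A * ((u0/A)^2 + (v0/A)^2) = (u0^2+v0^2)/A" using A by (simp add: field_simps power2_eq_square)
  moreover have "u0 * t / A * (v0 / A) - v0 * t / A * (u0 / A) = 0" by simp
  ultimately show ?thesis using speed_gen[OF X Y Z s'] True by simp
next
  case False
  obtain p q r where h: "h = (p,q,r)" by (cases h) auto
  let ?X = "\<lambda>t. u0 / z0 * sin (z0 * t / A) - v0 / z0 * (1 - cos (z0 * t / A))"
  let ?Y = "\<lambda>t. u0 / z0 * (1 - cos (z0 * t / A)) + v0 / z0 * sin (z0 * t / A)"
  let ?Z = "\<lambda>t. (z0 + B + (u0\<^sup>2 + v0\<^sup>2) / (2 * A * z0)) * t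
          - (u0\<^sup>2 + v0\<^sup>2) / (2 * z0\<^sup>2) * sin (z0 * t / A)"
  have s': "\<sigma> = (\<lambda>t. hmul (p,q,r) (?X t, ?Y t, ?Z t))"
    unfolding s h mgeo0_def using False by simp
  have X: "(?X has_real_derivative (u0 * cos (z0*t/A) - v0 * sin (z0*t/A)) / A) (at t)"
    using False A by (auto intro!: derivative_eq_intros simp: field_simps)
  have Y: "(?Y has_real_derivative (u0 * sin (z0*t/A) + v0 * cos (z0*t/A)) / A) (at t)"
    using False A by (auto intro!: derivative_eq_intros simp: field_simps)
  have Z: "(?Z has_real_derivative (z0 + B + (u0\<^sup>2 + v0\<^sup>2) / (2 * A * z0)) - (u0\<^sup>2 + v0\<^sup>2) / (2 * A * z0) * cos (z0*t/A)) (at t)"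
    using False A by (auto intro!: derivative_eq_intros simp: field_simps power2_eq_square)
  have sc: "sin (z0*t/A)^2 + cos (z0*t/A)^2 = 1" by simp
  have e1: "A * (((u0 * cos (z0*t/A) - v0 * sin (z0*t/A)) / A)^2 + ((u0 * sin (z0*t/A) + v0 * cos (z0*t/A)) / A)^2) = (u0^2+v0^2)/A"
    by (rule alg2[OF sc A])
  have e2: "?X t * ((u0 * sin (z0*t/A) + v0 * cos (z0*t/A)) / A) - ?Y t * ((u0 * cos (z0*t/A) - v0 * sin (z0*t/A)) / A)
     = (u0^2+v0^2) * (1 - cos (z0*t/A)) / (A * z0)"
    by (rule alg1[OF sc False]) (use A in simp)
  have e3: "(z0 + B + (u0\<^sup>2 + v0\<^sup>2) / (2 * A * z0)) - (u0\<^sup>2 + v0\<^sup>2) / (2 * A * z0) * cos (z0*t/A)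
     - (u0^2+v0^2) * (1 - cos (z0*t/A)) / (A * z0) / 2 = z0 + B"
    using A False by (simp add: field_simps)
  show ?thesis using speed_gen(1)[OF X Y Z s'] unfolding speed_gen(2)[OF X Y Z s'] e2 e3 e1 by simp
qed

lemma hmul_simp: "hmul (a,b,c) (x,y,z) = (a+x, b+y, c+z+(a*y-b*x)/2)"
  by (simp add: hmul_def)

lemma hmul_conj: "hmul (a,b,c) (hmul (p,q,r) w) = hmul (p,q,r) (hmul (a,b,c + a*q - b*p) w)"
  by (cases w) (simp add: hmul_def field_simps)

lemma hmul_cancel: "hmul h w = hmul h w' \<longleftrightarrow> w = w'"
  by (cases h; cases w; cases w') (auto simp: hmul_def)

lemma mgeo_z0: "mgeo0 A B u0 v0 0 t = (u0 * t / A, v0 * t / A, B * t)"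
  by (simp add: mgeo0_def)

lemma mgeo_nz: "z0 \<noteq> 0 \<Longrightarrow> mgeo0 A B u0 v0 z0 t =
      (u0 / z0 * sin (z0 * t / A) - v0 / z0 * (1 - cos (z0 * t / A)),
       u0 / z0 * (1 - cos (z0 * t / A)) + v0 / z0 * sin (z0 * t / A),
       (z0 + B + (u0\<^sup>2 + v0\<^sup>2) / (2 * A * z0)) * t
          - (u0\<^sup>2 + v0\<^sup>2) / (2 * z0\<^sup>2) * sin (z0 * t / A))"
  by (simp add: mgeo0_def)

lemma perQ:
  assumes A: "A > 0"
  shows "(\<forall>t. hmul (a,b,c) (mgeo0 A B u0 v0 0 t) = mgeo0 A B u0 v0 0 (t + \<omega>)) \<longleftrightarrow>
    (a = u0 * \<omega> / A \<and> b = v0 * \<omega> / A \<and> c = B * \<omega>)"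
proof
  assume "\<forall>t. hmul (a,b,c) (mgeo0 A B u0 v0 0 t) = mgeo0 A B u0 v0 0 (t + \<omega>)"
  from this[rule_format, of 0] show "a = u0 * \<omega> / A \<and> b = v0 * \<omega> / A \<and> c = B * \<omega>"
    by (simp add: mgeo_z0 hmul_simp)
next
  assume h: "a = u0 * \<omega> / A \<and> b = v0 * \<omega> / A \<and> c = B * \<omega>"
  show "\<forall>t. hmul (a,b,c) (mgeo0 A B u0 v0 0 t) = mgeo0 A B u0 v0 0 (t + \<omega>)"
  proof
    fix t
    from h have a: "a = u0 * \<omega> / A" and b: "b = v0 * \<omega> / A" and c: "c = B * \<omega>" by auto
    show "hmul (a,b,c) (mgeo0 A B u0 v0 0 t) = mgeo0 A B u0 v0 0 (t + \<omega>)"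
      unfolding mgeo_z0 hmul_simp a b c using A by (simp add: field_simps)
  qed
qed

lemma perR:
  assumes A: "A > 0" and z: "z0 \<noteq> 0"
  shows "(\<forall>t. hmul (a,b,c) (mgeo0 A B u0 v0 z0 t) = mgeo0 A B u0 v0 z0 (t + \<omega>)) \<longleftrightarrow>
    (a = 0 \<and> b = 0 \<and> c = (z0 + B + (u0\<^sup>2 + v0\<^sup>2) / (2 * A * z0)) * \<omega> \<and>
      (u0\<^sup>2 + v0\<^sup>2 = 0 \<or> (\<exists>k::int. z0 * \<omega> / A = 2 * pi * of_int k)))"
    (is "?L \<longleftrightarrow> ?R")
proof
  assume L: ?L
  define \<phi> where "\<phi> = z0 * \<omega> / A"
  define t1 where "t1 = pi * A / z0"
  have th1: "z0 * t1 / A = pi" using A z by (simp add: t1_def)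
  have th2: "z0 * (t1 + \<omega>) / A = pi + \<phi>" using A z by (simp add: t1_def \<phi>_def field_simps)
  have th3: "z0 * (0 + \<omega>) / A = \<phi>" by (simp add: \<phi>_def)
  note E0 = L[rule_format, of 0]
  note E1 = L[rule_format, of t1]
  from E0 have a0: "a = u0 / z0 * sin \<phi> - v0 / z0 * (1 - cos \<phi>)"
    and b0: "b = u0 / z0 * (1 - cos \<phi>) + v0 / z0 * sin \<phi>"
    and c0: "c = (z0 + B + (u0\<^sup>2 + v0\<^sup>2) / (2 * A * z0)) * \<omega>
          - (u0\<^sup>2 + v0\<^sup>2) / (2 * z0\<^sup>2) * sin \<phi>"
    using z by (simp_all add: mgeo_nz hmul_simp th3[simplified])
  from E1 have a1: "a + (u0 / z0 * sin pi - v0 / z0 * (1 - cos pi)) = u0 / z0 * sin (pi + \<phi>) - v0 / z0 * (1 - cos (pi + \<phi>))"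
    and b1: "b + (u0 / z0 * (1 - cos pi) + v0 / z0 * sin pi) = u0 / z0 * (1 - cos (pi + \<phi>)) + v0 / z0 * sin (pi + \<phi>)"
    using z unfolding mgeo_nz[OF z] hmul_simp th1 th2 by simp_all
  have a1': "a = - (u0 / z0 * sin \<phi>) - v0 / z0 * (1 + cos \<phi>) + 2 * v0 / z0"
    using a1 by (simp add: sin_add cos_add)
  have b1': "b = u0 / z0 * (1 + cos \<phi>) - 2 * u0 / z0 - v0 / z0 * sin \<phi>"
    using b1 by (simp add: sin_add cos_add)
  have "2 * a = (u0 / z0 * sin \<phi> - v0 / z0 * (1 - cos \<phi>)) + (- (u0 / z0 * sin \<phi>) - v0 / z0 * (1 + cos \<phi>) + 2 * v0 / z0)"
    using a0 a1' by linarith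
  also have "\<dots> = 0" using z by (simp add: field_simps)
  finally have "a = 0" by simp
  have "2 * b = (u0 / z0 * (1 - cos \<phi>) + v0 / z0 * sin \<phi>) + (u0 / z0 * (1 + cos \<phi>) - 2 * u0 / z0 - v0 / z0 * sin \<phi>)"
    using b0 b1' by linarith
  also have "\<dots> = 0" using z by (simp add: field_simps)
  finally have "b = 0" by simp
  note ab = `a = 0` `b = 0`
  have e1: "u0 * sin \<phi> - v0 * (1 - cos \<phi>) = 0" and e2: "u0 * (1 - cos \<phi>) + v0 * sin \<phi> = 0"
    using ab a0 b0 z by (simp_all add: field_simps)
  have r1: "(u0\<^sup>2 + v0\<^sup>2) * (1 - cos \<phi>) = 0"
  proof -
    have "(u0\<^sup>2 + v0\<^sup>2) * (1 - cos \<phi>) = u0 * (u0 * (1 - cos \<phi>) + v0 * sin \<phi>) - v0 * (u0 * sin \<phi> - v0 * (1 - cos \<phi>))"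
      by (simp add: algebra_simps power2_eq_square)
    then show ?thesis using e1 e2 by simp
  qed
  have r2: "(u0\<^sup>2 + v0\<^sup>2) * sin \<phi> = 0"
  proof -
    have "(u0\<^sup>2 + v0\<^sup>2) * sin \<phi> = u0 * (u0 * sin \<phi> - v0 * (1 - cos \<phi>)) + v0 * (u0 * (1 - cos \<phi>) + v0 * sin \<phi>)"
      by (simp add: algebra_simps power2_eq_square)
    then show ?thesis using e1 e2 by simp
  qed
  have c1: "c = (z0 + B + (u0\<^sup>2 + v0\<^sup>2) / (2 * A * z0)) * \<omega>"
  proof -
    have "(u0\<^sup>2 + v0\<^sup>2) / (2 * z0\<^sup>2) * sin \<phi> = 0" using r2 by simp
    then show ?thesis using c0 by simp
  qed
  have "u0\<^sup>2 + v0\<^sup>2 = 0 \<or> (\<exists>k::int. \<phi> = 2 * pi * of_int k)"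
  proof (cases "u0\<^sup>2 + v0\<^sup>2 = 0")
    case False
    then have "1 - cos \<phi> = 0" using r1 by (simp only: mult_eq_0_iff) simp
    then have "cos \<phi> = 1" by simp
    then obtain n :: int where "\<phi> = real_of_int n * 2 * pi" using cos_one_2pi_int by blast
    then show ?thesis by (auto simp: algebra_simps)
  qed simp
  then show ?R using `a = 0` `b = 0` c1 by (simp add: \<phi>_def)
next
  assume R: ?R
  show ?L
  proof
    fix t
    have th: "z0 * (t + \<omega>) / A = z0 * t / A + z0 * \<omega> / A" by (simp add: distrib_left add_divide_distrib)
    from R consider "a = 0 \<and> b = 0 \<and> u0 = 0 \<and> v0 = 0 \<and> c = (z0 + B) * \<omega>"
      | k :: int where "a = 0" "b = 0" "c = (z0 + B + (u0\<^sup>2 + v0\<^sup>2) / (2 * A * z0)) * \<omega>"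
          "z0 * \<omega> / A = 2 * pi * of_int k"
      by (auto simp: add_nonneg_eq_0_iff)
    then show "hmul (a,b,c) (mgeo0 A B u0 v0 z0 t) = mgeo0 A B u0 v0 z0 (t + \<omega>)"
    proof cases
      case 1
      then show ?thesis using z by (simp add: mgeo_nz hmul_simp algebra_simps)
    next
      case 2
      have s: "sin (z0 * (t + \<omega>) / A) = sin (z0 * t / A)" "cos (z0 * (t + \<omega>) / A) = cos (z0 * t / A)"
        unfolding th 2(4) by (simp_all add: sin_add cos_add)
      show ?thesis unfolding mgeo_nz[OF z] hmul_simp s using 2 by (simp add: algebra_simps add_divide_distrib[symmetric])
    qed
  qed
qed

lemma per_full:
  "(\<forall>t. hmul (a,b,c) (hmul (p,q,r) (mgeo0 A B u0 v0 z0 t)) = hmul (p,q,r) (mgeo0 A B u0 v0 z0 (t + \<omega>)))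
   \<longleftrightarrow> (\<forall>t. hmul (a,b,c + a*q - b*p) (mgeo0 A B u0 v0 z0 t) = mgeo0 A B u0 v0 z0 (t + \<omega>))"
  by (subst hmul_conj, subst hmul_cancel, rule refl)

lemma energy_iff:
  assumes A: "A > 0"
  shows "has_energy A (\<lambda>t. hmul h (mgeo0 A B u0 v0 z0 t)) E \<longleftrightarrow> E = sqrt ((u0^2+v0^2)/A + (z0+B)^2)"
proof -
  have "\<And>t. hspeed A (\<lambda>t. hmul h (mgeo0 A B u0 v0 z0 t)) t = sqrt ((u0^2+v0^2)/A + (z0+B)^2)"
    "\<And>t. (\<lambda>t. hmul h (mgeo0 A B u0 v0 z0 t)) differentiable (at t)"
    using mgeo_energy[OF A refl, of h B u0 v0 z0] by auto
  then show ?thesis unfolding has_energy_def by auto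
qed

lemma mg_elim:
  assumes "magnetic_geodesic A B \<sigma>"
  obtains p q r u0 v0 z0 where "\<sigma> = (\<lambda>t. hmul (p,q,r) (mgeo0 A B u0 v0 z0 t))"
proof -
  obtain h u0 v0 z0 where "\<forall>t. \<sigma> t = hmul h (mgeo0 A B u0 v0 z0 t)"
    using assms unfolding magnetic_geodesic_def by blast
  moreover obtain p q r where "h = (p,q,r)" by (cases h) auto
  ultimately have "\<sigma> = (\<lambda>t. hmul (p,q,r) (mgeo0 A B u0 v0 z0 t))" by auto
  then show ?thesis using that by blast
qed

lemma mg_intro: "magnetic_geodesic A B (\<lambda>t. hmul h (mgeo0 A B u0 v0 z0 t))"
  unfolding magnetic_geodesic_def by blast

lemma Lset_nonunit:
  assumes A: "A > 0" and ne: "(a,b,c) \<noteq> hunit"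
  shows "Lset A B (a,b,c) E = {E * \<bar>\<omega>\<bar> | \<omega> p q u0 v0 z0. E = sqrt ((u0^2+v0^2)/A + (z0+B)^2) \<and> \<omega> \<noteq> 0 \<and>
     (\<forall>t. hmul (a,b,c + a*q - b*p) (mgeo0 A B u0 v0 z0 t) = mgeo0 A B u0 v0 z0 (t + \<omega>))}"
    (is "_ = ?S")
proof
  show "Lset A B (a,b,c) E \<subseteq> ?S"
  proof
    fix x assume "x \<in> Lset A B (a,b,c) E"
    then obtain \<sigma> \<omega> where x: "x = E * \<bar>\<omega>\<bar>" and mg: "magnetic_geodesic A B \<sigma>" and en: "has_energy A \<sigma> E"
      and w: "\<omega> \<noteq> 0" and per: "\<forall>t. hmul (a,b,c) (\<sigma> t) = \<sigma> (t + \<omega>)"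
      using ne unfolding Lset_def by auto
    obtain p q r u0 v0 z0 where s: "\<sigma> = (\<lambda>t. hmul (p,q,r) (mgeo0 A B u0 v0 z0 t))"
      using mg_elim[OF mg] .
    have "E = sqrt ((u0^2+v0^2)/A + (z0+B)^2)" using en energy_iff[OF A] unfolding s by blast
    moreover have "\<forall>t. hmul (a,b,c + a*q - b*p) (mgeo0 A B u0 v0 z0 t) = mgeo0 A B u0 v0 z0 (t + \<omega>)"
      using per unfolding s per_full .
    ultimately show "x \<in> ?S" using x w by blast
  qed
next
  show "?S \<subseteq> Lset A B (a,b,c) E"
  proof
    fix x assume "x \<in> ?S"
    then obtain \<omega> p q u0 v0 z0 where x: "x = E * \<bar>\<omega>\<bar>" and e: "E = sqrt ((u0^2+v0^2)/A + (z0+B)^2)"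
      and w: "\<omega> \<noteq> 0" and per: "\<forall>t. hmul (a,b,c + a*q - b*p) (mgeo0 A B u0 v0 z0 t) = mgeo0 A B u0 v0 z0 (t + \<omega>)"
      by blast
    let ?\<sigma> = "\<lambda>t. hmul (p,q,0) (mgeo0 A B u0 v0 z0 t)"
    have "has_energy A ?\<sigma> E" using e energy_iff[OF A] by blast
    moreover have "\<forall>t. hmul (a,b,c) (?\<sigma> t) = ?\<sigma> (t + \<omega>)" using per unfolding per_full .
    ultimately have "\<exists>\<sigma> \<omega>'. x = E * \<bar>\<omega>'\<bar> \<and> magnetic_geodesic A B \<sigma> \<and> has_energy A \<sigma> E \<and> \<omega>' \<noteq> 0 \<and>
          (\<forall>t. hmul (a,b,c) (\<sigma> t) = \<sigma> (t + \<omega>'))"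
      using x w mg_intro by blast
    then show "x \<in> Lset A B (a,b,c) E" using ne unfolding Lset_def by simp
  qed
qed

lemma alg_K:
  fixes A z0 B E r2 w l :: real
  assumes A: "A > 0" and z: "z0 \<noteq> 0" and r: "r2 = A * (E^2 - (z0+B)^2)" and w: "w = 2 * pi * A * l / z0"
  shows "(z0 + B + r2 / (2 * A * z0)) * w = pi * A * l * (1 + (E^2 - B^2) / z0^2)"
  using A z unfolding r w by (simp add: field_simps power2_eq_square)

lemma sq_abs: fixes E X :: real shows "E > 0 \<Longrightarrow> E^2 = X^2 \<Longrightarrow> E = \<bar>X\<bar>"
  using power2_eq_iff_nonneg[of E "\<bar>X\<bar>"] by simp

lemma sqrt_E: "E > 0 \<Longrightarrow> E = sqrt (x + y) \<longleftrightarrow> x + y = E^2"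
  by auto

lemma Lset_central:
  assumes A: "A > 0" and E: "E > 0" and c: "c \<noteq> 0"
  shows "Lset A B (0,0,c) E = {\<bar>c\<bar>} \<union> {2 * pi * A * E * \<bar>of_int l\<bar> / \<bar>z0\<bar> | l z0.
      l \<noteq> 0 \<and> z0 \<noteq> 0 \<and> (z0+B)^2 < E^2 \<and> c = pi * A * of_int l * (1 + (E^2 - B^2) / z0^2)}"
    (is "_ = ?R")
proof -
  have ne: "(0,0,c) \<noteq> hunit" using c by (simp add: hunit_def)
  have L: "Lset A B (0,0,c) E = {E * \<bar>\<omega>\<bar> | \<omega> u0 v0 z0. E = sqrt ((u0^2+v0^2)/A + (z0+B)^2) \<and> \<omega> \<noteq> 0 \<and>
     (\<forall>t. hmul (0,0,c) (mgeo0 A B u0 v0 z0 t) = mgeo0 A B u0 v0 z0 (t + \<omega>))}"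
    unfolding Lset_nonunit[OF A ne] by simp
  show ?thesis unfolding L
  proof (intro equalityI subsetI)
    fix x assume "x \<in> {E * \<bar>\<omega>\<bar> | \<omega> u0 v0 z0. E = sqrt ((u0^2+v0^2)/A + (z0+B)^2) \<and> \<omega> \<noteq> 0 \<and>
     (\<forall>t. hmul (0,0,c) (mgeo0 A B u0 v0 z0 t) = mgeo0 A B u0 v0 z0 (t + \<omega>))}"
    then obtain \<omega> u0 v0 z0 where x: "x = E * \<bar>\<omega>\<bar>" and e: "E = sqrt ((u0^2+v0^2)/A + (z0+B)^2)"
      and w: "\<omega> \<noteq> 0" and per: "\<forall>t. hmul (0,0,c) (mgeo0 A B u0 v0 z0 t) = mgeo0 A B u0 v0 z0 (t + \<omega>)"
      by blast
    have e2: "(u0^2+v0^2)/A + (z0+B)^2 = E^2" using e E by auto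
    show "x \<in> ?R"
    proof (cases "z0 = 0")
      case True
      then have "0 = u0 * \<omega> / A \<and> 0 = v0 * \<omega> / A \<and> c = B * \<omega>" using per perQ[OF A] by simp
      then have "u0 = 0" "v0 = 0" "c = B * \<omega>" using w A by auto
      then have "E^2 = B^2" using e2 True by simp
      then have "E = \<bar>B\<bar>" using E sq_abs by blast
      then have "x = \<bar>c\<bar>" using x `c = B * \<omega>` by (simp add: abs_mult)
      then show ?thesis by simp
    next
      case False
      have R: "c = (z0 + B + (u0\<^sup>2 + v0\<^sup>2) / (2 * A * z0)) * \<omega> \<and>
          (u0\<^sup>2 + v0\<^sup>2 = 0 \<or> (\<exists>k::int. z0 * \<omega> / A = 2 * pi * of_int k))"
        using per unfolding perR[OF A False] by simp
      show ?thesis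
      proof (cases "u0\<^sup>2 + v0\<^sup>2 = 0")
        case True
        then have "c = (z0 + B) * \<omega>" "E^2 = (z0+B)^2" using R e2 by auto
        then have "E = \<bar>z0+B\<bar>" using E sq_abs by blast
        then have "x = \<bar>c\<bar>" using x `c = (z0 + B) * \<omega>` by (simp add: abs_mult)
        then show ?thesis by simp
      next
        case r: False
        then obtain k :: int where k: "z0 * \<omega> / A = 2 * pi * of_int k" using R by blast
        have wk: "\<omega> = 2 * pi * A * of_int k / z0" using k A False by (simp add: field_simps)
        have k0: "k \<noteq> 0" using wk w by auto
        have r2: "u0\<^sup>2 + v0\<^sup>2 = A * (E^2 - (z0+B)^2)" using e2 A by (simp add: field_simps)
        have "u0\<^sup>2 + v0\<^sup>2 > 0" using r sum_power2_ge_zero[of u0 v0] by linarith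
        then have "(u0\<^sup>2 + v0\<^sup>2) / A > 0" using A by simp
        then have lt: "(z0+B)^2 < E^2" using e2 by linarith
        have cc: "c = pi * A * of_int k * (1 + (E^2 - B^2) / z0^2)"
          using R alg_K[OF A False r2 wk] by simp
        have "x = 2 * pi * A * E * \<bar>of_int k\<bar> / \<bar>z0\<bar>" unfolding x wk using A E
          by (simp add: abs_mult abs_divide)
        then show ?thesis using k0 False lt cc by blast
      qed
    qed
  next
    fix x assume "x \<in> ?R"
    then consider "x = \<bar>c\<bar>" | l z0 where "x = 2 * pi * A * E * \<bar>of_int l\<bar> / \<bar>z0\<bar>" "l \<noteq> 0" "z0 \<noteq> 0"
      "(z0+B)^2 < E^2" "c = pi * A * of_int l * (1 + (E^2 - B^2) / z0^2)" by blast
    then show "x \<in> {E * \<bar>\<omega>\<bar> | \<omega> u0 v0 z0. E = sqrt ((u0^2+v0^2)/A + (z0+B)^2) \<and> \<omega> \<noteq> 0 \<and>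
     (\<forall>t. hmul (0,0,c) (mgeo0 A B u0 v0 z0 t) = mgeo0 A B u0 v0 z0 (t + \<omega>))}"
    proof cases
      case 1
      define z0 where "z0 = (if E = B then - E - B else E - B)"
      have z: "z0 \<noteq> 0" using E by (auto simp: z0_def)
      have zb: "\<bar>z0 + B\<bar> = E" using E by (auto simp: z0_def)
      define \<omega> where "\<omega> = c / (z0 + B)"
      have w: "\<omega> \<noteq> 0" using c zb E by (auto simp: \<omega>_def)
      have "E = sqrt ((0^2+0^2)/A + (z0+B)^2)" using zb E by simp
      moreover have "\<forall>t. hmul (0,0,c) (mgeo0 A B 0 0 z0 t) = mgeo0 A B 0 0 z0 (t + \<omega>)"
        unfolding perR[OF A z] using zb E by (simp add: \<omega>_def)
      moreover have "x = E * \<bar>\<omega>\<bar>" using 1 zb E by (simp add: \<omega>_def abs_divide)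
      ultimately show ?thesis using w by blast
    next
      case 2
      define u0 where "u0 = sqrt (A * (E^2 - (z0+B)^2))"
      have u: "u0^2 + 0^2 = A * (E^2 - (z0+B)^2)" using 2(4) A by (simp add: u0_def)
      define \<omega> where "\<omega> = 2 * pi * A * of_int l / z0"
      have w: "\<omega> \<noteq> 0" using 2 A by (simp add: \<omega>_def)
      have "E = sqrt ((u0^2+0^2)/A + (z0+B)^2)" using u A E by simp
      moreover have "\<forall>t. hmul (0,0,c) (mgeo0 A B u0 0 z0 t) = mgeo0 A B u0 0 z0 (t + \<omega>)"
        unfolding perR[OF A 2(3)] using alg_K[OF A 2(3) u[symmetric, symmetric] \<omega>_def] 2 A
        by (auto simp: \<omega>_def)
      moreover have "x = E * \<bar>\<omega>\<bar>" using 2 A E by (simp add: \<omega>_def abs_mult abs_divide)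
      ultimately show ?thesis using w by blast
    qed
  qed
qed


lemma sq_lt: fixes x y :: real shows "y \<ge> 0 \<Longrightarrow> x^2 < y^2 \<longleftrightarrow> \<bar>x\<bar> < y"
  using abs_le_square_iff[of y x] by auto

lemma sqrt_ratio: fixes E B :: real assumes "E > 0" shows "sqrt (1 - B^2/E^2) = sqrt (E^2 - B^2) / E"
proof -
  have "1 - B^2/E^2 = (E^2 - B^2) / E^2" using assms by (simp add: field_simps)
  then show ?thesis using assms by (simp add: real_sqrt_divide)
qed

lemma sqrt_ratio2: fixes E B :: real assumes "E > 0" shows "sqrt (B^2/E^2 - 1) = sqrt (B^2 - E^2) / E"
proof -
  have "B^2/E^2 - 1 = (B^2 - E^2) / E^2" using assms by (simp add: field_simps)
  then show ?thesis using assms by (simp add: real_sqrt_divide)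
qed

lemma Lset_V:
  fixes a b c A B E :: real
  assumes A: "A > 0" and E: "E > 0" and ab: "(a,b) \<noteq> (0,0)"
  shows "Lset A B (a,b,c) E = (if E > \<bar>B\<bar> then {sqrt (A * (a\<^sup>2 + b\<^sup>2)) / sqrt (1 - B\<^sup>2 / E\<^sup>2)} else {})"
proof -
  have ne: "(a,b,c) \<noteq> hunit" using ab by (auto simp: hunit_def)
  have abp: "a\<^sup>2 + b\<^sup>2 > 0" using ab by (auto simp: sum_power2_gt_zero_iff)
  show ?thesis unfolding Lset_nonunit[OF A ne]
  proof (intro equalityI subsetI)
    fix x assume "x \<in> {E * \<bar>\<omega>\<bar> | \<omega> p q u0 v0 z0. E = sqrt ((u0^2+v0^2)/A + (z0+B)^2) \<and> \<omega> \<noteq> 0 \<and>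
     (\<forall>t. hmul (a,b,c + a*q - b*p) (mgeo0 A B u0 v0 z0 t) = mgeo0 A B u0 v0 z0 (t + \<omega>))}"
    then obtain \<omega> p q u0 v0 z0 where x: "x = E * \<bar>\<omega>\<bar>" and e: "E = sqrt ((u0^2+v0^2)/A + (z0+B)^2)"
      and w: "\<omega> \<noteq> 0" and per: "\<forall>t. hmul (a,b,c + a*q - b*p) (mgeo0 A B u0 v0 z0 t) = mgeo0 A B u0 v0 z0 (t + \<omega>)"
      by blast
    have e2: "(u0^2+v0^2)/A + (z0+B)^2 = E^2" using e E by auto
    have z: "z0 = 0"
    proof (rule ccontr)
      assume "z0 \<noteq> 0"
      then have "a = 0 \<and> b = 0" using per unfolding perR[OF A `z0 \<noteq> 0`] by blast
      then show False using ab by simp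
    qed
    have ab0: "a = u0 * \<omega> / A" "b = v0 * \<omega> / A" using per unfolding z perQ[OF A] by auto
    have "u0 \<noteq> 0 \<or> v0 \<noteq> 0" using ab ab0 by auto
    then have up: "u0^2 + v0^2 > 0" by (simp add: sum_power2_gt_zero_iff)
    then have "(u0^2+v0^2)/A > 0" using A by simp
    then have lt: "B^2 < E^2" using e2 z by simp
    then have EB: "E > \<bar>B\<bar>" using sq_lt[of E B] E by simp
    have D: "E^2 - B^2 > 0" using lt by simp
    have u2: "u0^2 + v0^2 = A * (E^2 - B^2)" using e2 z A by (simp add: field_simps)
    have "A * (a\<^sup>2 + b\<^sup>2) = (u0^2 + v0^2) * \<omega>^2 / A" unfolding ab0 using A
      by (simp add: field_simps power2_eq_square)
    also have "\<dots> = (E^2 - B^2) * \<omega>^2" unfolding u2 using A by simp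
    finally have "sqrt (A * (a\<^sup>2 + b\<^sup>2)) = sqrt (E^2 - B^2) * \<bar>\<omega>\<bar>" by (simp add: real_sqrt_mult)
    then have "sqrt (A * (a\<^sup>2 + b\<^sup>2)) / sqrt (1 - B\<^sup>2 / E\<^sup>2) = x"
      unfolding sqrt_ratio[OF E] x using D E by simp
    then show "x \<in> (if E > \<bar>B\<bar> then {sqrt (A * (a\<^sup>2 + b\<^sup>2)) / sqrt (1 - B\<^sup>2 / E\<^sup>2)} else {})"
      using EB by simp
  next
    fix x assume xin: "x \<in> (if E > \<bar>B\<bar> then {sqrt (A * (a\<^sup>2 + b\<^sup>2)) / sqrt (1 - B\<^sup>2 / E\<^sup>2)} else {})"
    then have EB: "E > \<bar>B\<bar>" by (auto split: if_splits)
    then have x: "x = sqrt (A * (a\<^sup>2 + b\<^sup>2)) / sqrt (1 - B\<^sup>2 / E\<^sup>2)" using xin by simp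
    have "B^2 < E^2" using sq_lt[of E B] E EB by simp
    then have D: "E^2 - B^2 > 0" by simp
    define \<omega> where "\<omega> = sqrt (A * (a\<^sup>2 + b\<^sup>2)) / sqrt (E^2 - B^2)"
    have wp: "\<omega> > 0" unfolding \<omega>_def using D A abp ab by simp
    have w2: "\<omega>^2 = A * (a\<^sup>2 + b\<^sup>2) / (E^2 - B^2)" unfolding \<omega>_def using D A abp
      by (simp add: power_divide)
    define u0 where "u0 = a * A / \<omega>"
    define v0 where "v0 = b * A / \<omega>"
    define p where "p = (if a \<noteq> 0 then 0 else (c - B * \<omega>) / b)"
    define q where "q = (if a \<noteq> 0 then (B * \<omega> - c) / a else 0)"
    have cq: "c + a * q - b * p = B * \<omega>"
    proof (cases "a = 0")
      case True
      then have "b \<noteq> 0" using ab by simp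
      then show ?thesis using True by (simp add: p_def q_def)
    qed (simp add: p_def q_def)
    have "(u0^2 + v0^2) / A = A * (a\<^sup>2 + b\<^sup>2) / \<omega>^2" unfolding u0_def v0_def using A wp
      by (simp add: field_simps power2_eq_square)
    also have "\<dots> = E^2 - B^2" unfolding w2 using A abp D ab by simp
    finally have "E = sqrt ((u0^2+v0^2)/A + (0+B)^2)" using E by simp
    moreover have "\<forall>t. hmul (a,b,c + a*q - b*p) (mgeo0 A B u0 v0 0 t) = mgeo0 A B u0 v0 0 (t + \<omega>)"
      unfolding perQ[OF A] cq using wp A by (simp add: u0_def v0_def)
    moreover have "x = E * \<bar>\<omega>\<bar>" unfolding x sqrt_ratio[OF E] \<omega>_def using E D A abp by simp
    ultimately show "x \<in> {E * \<bar>\<omega>\<bar> | \<omega> p q u0 v0 z0. E = sqrt ((u0^2+v0^2)/A + (z0+B)^2) \<and> \<omega> \<noteq> 0 \<and>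
     (\<forall>t. hmul (a,b,c + a*q - b*p) (mgeo0 A B u0 v0 z0 t) = mgeo0 A B u0 v0 z0 (t + \<omega>))}"
      using wp by blast
  qed
qed

lemma hmul_unit0: "hmul (0,0,0) w = w"
  by (cases w) (simp add: hmul_def)

lemma per_sig:
  "(\<forall>t. hmul (p,q,r) (mgeo0 A B u0 v0 z0 (t + \<omega>)) = hmul (p,q,r) (mgeo0 A B u0 v0 z0 t)) \<longleftrightarrow>
   (\<forall>t. hmul (0,0,0) (mgeo0 A B u0 v0 z0 t) = mgeo0 A B u0 v0 z0 (t + \<omega>))"
proof -
  have "(\<forall>t. hmul (p,q,r) (mgeo0 A B u0 v0 z0 (t + \<omega>)) = hmul (p,q,r) (mgeo0 A B u0 v0 z0 t)) \<longleftrightarrow>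
    (\<forall>t. hmul (0,0,0) (hmul (p,q,r) (mgeo0 A B u0 v0 z0 t)) = hmul (p,q,r) (mgeo0 A B u0 v0 z0 (t + \<omega>)))"
    unfolding hmul_unit0 by auto
  also have "\<dots> \<longleftrightarrow> (\<forall>t. hmul (0,0,0 + 0*q - 0*p) (mgeo0 A B u0 v0 z0 t) = mgeo0 A B u0 v0 z0 (t + \<omega>))"
    by (rule per_full)
  finally show ?thesis by simp
qed

lemma per_k:
  assumes A: "A > 0" and z: "z0 \<noteq> 0" and k: "z0 * \<omega> / A = 2 * pi * of_int k"
  shows "\<omega> = 2 * pi * A * of_int k / z0" "\<bar>\<omega>\<bar> = 2 * pi * A * \<bar>of_int k\<bar> / \<bar>z0\<bar>"
proof -
  show w: "\<omega> = 2 * pi * A * of_int k / z0" using k A z by (simp add: field_simps)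
  show "\<bar>\<omega>\<bar> = 2 * pi * A * \<bar>of_int k\<bar> / \<bar>z0\<bar>" unfolding w using A by (simp add: abs_mult abs_divide)
qed

lemma per_base:
  assumes A: "A > 0" and z: "z0 \<noteq> 0"
  shows "\<exists>k::int. z0 * (2 * pi * A / \<bar>z0\<bar>) / A = 2 * pi * of_int k"
proof (cases "z0 > 0")
  case True
  then show ?thesis using A by (intro exI[of _ 1]) simp
next
  case False
  then have "z0 < 0" using z by simp
  then show ?thesis using A by (intro exI[of _ "-1"]) simp
qed

lemma per0_char:
  assumes A: "A > 0" and E: "E > 0" and e: "E = sqrt ((u0^2+v0^2)/A + (z0+B)^2)" and w: "\<omega> \<noteq> 0"
  shows "(\<forall>t. hmul (0,0,0) (mgeo0 A B u0 v0 z0 t) = mgeo0 A B u0 v0 z0 (t + \<omega>)) \<longleftrightarrow>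
     (z0 \<noteq> 0 \<and> u0^2 + v0^2 \<noteq> 0 \<and> z0 + B + (u0\<^sup>2 + v0\<^sup>2) / (2 * A * z0) = 0 \<and>
      (\<exists>k::int. z0 * \<omega> / A = 2 * pi * of_int k))"
proof
  assume P: "\<forall>t. hmul (0,0,0) (mgeo0 A B u0 v0 z0 t) = mgeo0 A B u0 v0 z0 (t + \<omega>)"
  show "z0 \<noteq> 0 \<and> u0^2 + v0^2 \<noteq> 0 \<and> z0 + B + (u0\<^sup>2 + v0\<^sup>2) / (2 * A * z0) = 0 \<and>
      (\<exists>k::int. z0 * \<omega> / A = 2 * pi * of_int k)"
  proof (cases "z0 = 0")
    case True
    then have "0 = u0 * \<omega> / A \<and> 0 = v0 * \<omega> / A \<and> 0 = B * \<omega>" using P perQ[OF A] by simp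
    then have "u0 = 0" "v0 = 0" "B = 0" using w A by auto
    then have False using e E True by simp
    then show ?thesis ..
  next
    case False
    have R: "0 = (z0 + B + (u0\<^sup>2 + v0\<^sup>2) / (2 * A * z0)) * \<omega> \<and>
          (u0\<^sup>2 + v0\<^sup>2 = 0 \<or> (\<exists>k::int. z0 * \<omega> / A = 2 * pi * of_int k))"
      using P unfolding perR[OF A False] by simp
    then have K: "z0 + B + (u0\<^sup>2 + v0\<^sup>2) / (2 * A * z0) = 0" using w by simp
    have r: "u0^2 + v0^2 \<noteq> 0"
    proof
      assume r0: "u0^2 + v0^2 = 0"
      then have "z0 + B = 0" using K by simp
      then show False using e E r0 by simp
    qed
    then show ?thesis using R K False by auto
  qed
next
  assume "z0 \<noteq> 0 \<and> u0^2 + v0^2 \<noteq> 0 \<and> z0 + B + (u0\<^sup>2 + v0\<^sup>2) / (2 * A * z0) = 0 \<and>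
      (\<exists>k::int. z0 * \<omega> / A = 2 * pi * of_int k)"
  moreover then have z: "z0 \<noteq> 0" by simp
  ultimately show "\<forall>t. hmul (0,0,0) (mgeo0 A B u0 v0 z0 t) = mgeo0 A B u0 v0 z0 (t + \<omega>)"
    unfolding perR[OF A z] by auto
qed

lemma Lset_unit:
  fixes A B E :: real
  assumes A: "A > 0" and E: "E > 0"
  shows "Lset A B hunit E = (if E < \<bar>B\<bar> then {2 * pi * A / sqrt (B\<^sup>2 / E\<^sup>2 - 1)} else {})"
proof -
  let ?P = "\<lambda>\<sigma> \<omega>. \<forall>t. \<sigma> (t + \<omega>) = \<sigma> t"
  have L: "Lset A B hunit E = {E * \<omega> | \<sigma> \<omega>. magnetic_geodesic A B \<sigma> \<and> has_energy A \<sigma> E \<and> \<omega> > 0 \<and>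
          ?P \<sigma> \<omega> \<and> (\<forall>\<omega>'. 0 < \<omega>' \<and> \<omega>' < \<omega> \<longrightarrow> \<not> ?P \<sigma> \<omega>')}"
    unfolding Lset_def by simp
  show ?thesis unfolding L
  proof (intro equalityI subsetI)
    fix x assume "x \<in> {E * \<omega> | \<sigma> \<omega>. magnetic_geodesic A B \<sigma> \<and> has_energy A \<sigma> E \<and> \<omega> > 0 \<and>
          ?P \<sigma> \<omega> \<and> (\<forall>\<omega>'. 0 < \<omega>' \<and> \<omega>' < \<omega> \<longrightarrow> \<not> ?P \<sigma> \<omega>')}"
    then obtain \<sigma> \<omega> where x: "x = E * \<omega>" and mg: "magnetic_geodesic A B \<sigma>" and en: "has_energy A \<sigma> E"
      and wp: "\<omega> > 0" and per: "?P \<sigma> \<omega>" and least: "\<forall>\<omega>'. 0 < \<omega>' \<and> \<omega>' < \<omega> \<longrightarrow> \<not> ?P \<sigma> \<omega>'"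
      by blast
    obtain p q r u0 v0 z0 where s: "\<sigma> = (\<lambda>t. hmul (p,q,r) (mgeo0 A B u0 v0 z0 t))"
      using mg_elim[OF mg] .
    have e: "E = sqrt ((u0^2+v0^2)/A + (z0+B)^2)" using en energy_iff[OF A] unfolding s by blast
    have e2: "(u0^2+v0^2)/A + (z0+B)^2 = E^2" using e E by auto
    have Pw: "\<forall>t. hmul (0,0,0) (mgeo0 A B u0 v0 z0 t) = mgeo0 A B u0 v0 z0 (t + \<omega>)"
      using per unfolding s per_sig .
    then have C: "z0 \<noteq> 0 \<and> u0^2 + v0^2 \<noteq> 0 \<and> z0 + B + (u0\<^sup>2 + v0\<^sup>2) / (2 * A * z0) = 0 \<and>
      (\<exists>k::int. z0 * \<omega> / A = 2 * pi * of_int k)" using per0_char[OF A E e] wp by simp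
    then have z: "z0 \<noteq> 0" and K: "z0 + B + (u0\<^sup>2 + v0\<^sup>2) / (2 * A * z0) = 0" by auto
    from C obtain k :: int where k: "z0 * \<omega> / A = 2 * pi * of_int k" by blast
    have r2: "(u0\<^sup>2 + v0\<^sup>2) / A = - 2 * z0 * (z0 + B)" using K A z by (simp add: field_simps)
    have Ez: "E^2 = B^2 - z0^2" using e2 unfolding r2 by (simp add: power2_eq_square algebra_simps)
    have "z0^2 > 0" using z by simp
    then have "E^2 < B^2" using Ez by simp
    then have EB: "E < \<bar>B\<bar>" using sq_lt[of "\<bar>B\<bar>" E] E by simp
    define \<omega>1 where "\<omega>1 = 2 * pi * A / \<bar>z0\<bar>"
    have w1p: "\<omega>1 > 0" using A z by (simp add: \<omega>1_def)
    have "\<forall>t. hmul (0,0,0) (mgeo0 A B u0 v0 z0 t) = mgeo0 A B u0 v0 z0 (t + \<omega>1)"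
      unfolding per0_char[OF A E e w1p[THEN less_imp_neq, symmetric]] using C per_base[OF A z]
      unfolding \<omega>1_def by blast
    then have "?P \<sigma> \<omega>1" unfolding s per_sig .
    then have "\<omega> \<le> \<omega>1" using least w1p by force
    moreover have "\<omega> \<ge> \<omega>1"
    proof -
      have "k \<noteq> 0" using per_k(1)[OF A z k] wp by auto
      then have "\<bar>real_of_int k\<bar> \<ge> 1" by linarith
      then have "2 * pi * A * 1 / \<bar>z0\<bar> \<le> 2 * pi * A * \<bar>of_int k\<bar> / \<bar>z0\<bar>"
        using A z by (intro divide_right_mono mult_left_mono) auto
      then show ?thesis using per_k(2)[OF A z k] wp unfolding \<omega>1_def by simp
    qed
    ultimately have ww: "\<omega> = \<omega>1" by simp
    have az: "\<bar>z0\<bar> = sqrt (B^2 - E^2)" using Ez by simp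
    have "x = 2 * pi * A / sqrt (B\<^sup>2 / E\<^sup>2 - 1)"
      unfolding x ww \<omega>1_def sqrt_ratio2[OF E] az using E by simp
    then show "x \<in> (if E < \<bar>B\<bar> then {2 * pi * A / sqrt (B\<^sup>2 / E\<^sup>2 - 1)} else {})" using EB by simp
  next
    fix x assume xin: "x \<in> (if E < \<bar>B\<bar> then {2 * pi * A / sqrt (B\<^sup>2 / E\<^sup>2 - 1)} else {})"
    then have EB: "E < \<bar>B\<bar>" by (auto split: if_splits)
    then have x: "x = 2 * pi * A / sqrt (B\<^sup>2 / E\<^sup>2 - 1)" using xin by simp
    have "E^2 < B^2" using sq_lt[of "\<bar>B\<bar>" E] E EB by simp
    define s where "s = sqrt (B^2 - E^2)"
    have sp: "s > 0" using `E^2 < B^2` by (simp add: s_def)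
    have s2: "s^2 = B^2 - E^2" using `E^2 < B^2` by (simp add: s_def)
    have "s^2 < B^2" using s2 E by simp
    then have sB: "s < \<bar>B\<bar>" using sq_lt[of "\<bar>B\<bar>" s] by simp
    define z0 where "z0 = (if B > 0 then - s else s)"
    have z: "z0 \<noteq> 0" using sp by (simp add: z0_def)
    have z2: "z0^2 = B^2 - E^2" using s2 by (simp add: z0_def)
    have azs: "\<bar>z0\<bar> = s" using sp by (simp add: z0_def)
    have neg: "z0 * (z0 + B) < 0"
    proof (cases "B > 0")
      case True
      then have "z0 * (z0 + B) = - s * (B - s)" by (simp add: z0_def algebra_simps)
      moreover have "B - s > 0" using sB True by simp
      ultimately show ?thesis using sp by (simp add: mult_pos_pos)
    next
      case False
      then have "z0 * (z0 + B) = s * (s + B)" by (simp add: z0_def algebra_simps)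
      moreover have "s + B < 0" using sB False by simp
      ultimately show ?thesis using sp by (simp add: mult_pos_neg)
    qed
    define u0 where "u0 = sqrt (- 2 * A * z0 * (z0 + B))"
    have "A * (z0 * (z0 + B)) < 0" using neg A by (simp add: mult_pos_neg)
    then have u2: "u0^2 = - 2 * A * z0 * (z0 + B)" unfolding u0_def
      by (simp add: algebra_simps)
    have "(u0^2 + 0^2)/A + (z0+B)^2 = B^2 - z0^2" unfolding u2 using A
      by (simp add: field_simps power2_eq_square)
    then have e: "E = sqrt ((u0^2+0^2)/A + (z0+B)^2)" unfolding z2 using E by simp
    have rne: "u0^2 + 0^2 \<noteq> 0" unfolding u2 using A neg by (auto simp: mult_less_0_iff)
    have K: "z0 + B + (u0\<^sup>2 + 0\<^sup>2) / (2 * A * z0) = 0" unfolding u2 using A z by (simp add: field_simps)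
    define \<sigma> where "\<sigma> = (\<lambda>t. hmul (0,0,0) (mgeo0 A B u0 0 z0 t))"
    define \<omega>1 where "\<omega>1 = 2 * pi * A / \<bar>z0\<bar>"
    have w1p: "\<omega>1 > 0" using A z by (simp add: \<omega>1_def)
    have "has_energy A \<sigma> E" unfolding \<sigma>_def energy_iff[OF A] using e by simp
    moreover have "magnetic_geodesic A B \<sigma>" unfolding \<sigma>_def by (rule mg_intro)
    moreover have "?P \<sigma> \<omega>1" unfolding \<sigma>_def per_sig
      unfolding per0_char[OF A E e w1p[THEN less_imp_neq, symmetric]] using z rne K per_base[OF A z]
      unfolding \<omega>1_def by blast
    moreover have "\<forall>\<omega>'. 0 < \<omega>' \<and> \<omega>' < \<omega>1 \<longrightarrow> \<not> ?P \<sigma> \<omega>'"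
    proof (intro allI impI notI)
      fix \<omega>' assume b: "0 < \<omega>' \<and> \<omega>' < \<omega>1" and "?P \<sigma> \<omega>'"
      then have "\<forall>t. hmul (0,0,0) (mgeo0 A B u0 0 z0 t) = mgeo0 A B u0 0 z0 (t + \<omega>')"
        unfolding \<sigma>_def per_sig by simp
      then obtain k :: int where k: "z0 * \<omega>' / A = 2 * pi * of_int k"
        using per0_char[OF A E e, of \<omega>'] b by auto
      have "2 * pi * A * \<bar>of_int k\<bar> / \<bar>z0\<bar> < 2 * pi * A * 1 / \<bar>z0\<bar>"
        using per_k(2)[OF A z k] b unfolding \<omega>1_def by simp
      then have "\<bar>real_of_int k\<bar> < 1" using A z by (simp add: divide_less_cancel)
      then have "k = 0" by linarith
      then show False using per_k(1)[OF A z k] b by simp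
    qed
    moreover have "x = E * \<omega>1"
      unfolding x \<omega>1_def sqrt_ratio2[OF E] azs s_def using E by simp
    ultimately show "x \<in> {E * \<omega> | \<sigma> \<omega>. magnetic_geodesic A B \<sigma> \<and> has_energy A \<sigma> E \<and> \<omega> > 0 \<and>
          ?P \<sigma> \<omega> \<and> (\<forall>\<omega>'. 0 < \<omega>' \<and> \<omega>' < \<omega> \<longrightarrow> \<not> ?P \<sigma> \<omega>')}" using w1p by blast
  qed
qed

lemma val_gt:
  fixes A B E c z0 :: real and l :: int
  assumes A: "A > 0" and E: "E > 0" and z: "z0 \<noteq> 0" and EB: "E > \<bar>B\<bar>"
    and c: "c = pi * A * of_int l * (1 + (E^2 - B^2) / z0^2)"
  shows "2 * pi * A * E * \<bar>of_int l\<bar> / \<bar>z0\<bar> = sqrt (4 * pi * A * of_int l * (c - pi * A * of_int l)) / sqrt (1 - B\<^sup>2 / E\<^sup>2)"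
proof -
  have D: "E^2 - B^2 > 0" using sq_lt[of E B] E EB by simp
  have "4 * pi * A * of_int l * (c - pi * A * of_int l) = (2 * pi * A * of_int l / z0)^2 * (E^2 - B^2)"
    unfolding c using z by (simp add: field_simps power2_eq_square)
  then have "sqrt (4 * pi * A * of_int l * (c - pi * A * of_int l)) = \<bar>2 * pi * A * of_int l / z0\<bar> * sqrt (E^2 - B^2)"
    by (simp add: real_sqrt_mult)
  then show ?thesis unfolding sqrt_ratio[OF E] using D E A
    by (simp add: abs_mult abs_divide field_simps)
qed

lemma val_lt:
  fixes A B E c z0 :: real and l :: int
  assumes A: "A > 0" and E: "E > 0" and z: "z0 \<noteq> 0" and EB: "E < \<bar>B\<bar>"
    and c: "c = pi * A * of_int l * (1 + (E^2 - B^2) / z0^2)"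
  shows "2 * pi * A * E * \<bar>of_int l\<bar> / \<bar>z0\<bar> = sqrt (4 * pi * A * of_int l * (pi * A * of_int l - c)) / sqrt (B\<^sup>2 / E\<^sup>2 - 1)"
proof -
  have D: "B^2 - E^2 > 0" using sq_lt[of "\<bar>B\<bar>" E] E EB by simp
  have "4 * pi * A * of_int l * (pi * A * of_int l - c) = (2 * pi * A * of_int l / z0)^2 * (B^2 - E^2)"
    unfolding c using z by (simp add: field_simps power2_eq_square)
  then have "sqrt (4 * pi * A * of_int l * (pi * A * of_int l - c)) = \<bar>2 * pi * A * of_int l / z0\<bar> * sqrt (B^2 - E^2)"
    by (simp add: real_sqrt_mult)
  then show ?thesis unfolding sqrt_ratio2[OF E] using D E A
    by (simp add: abs_mult abs_divide field_simps)
qed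

lemma z_bounds:
  fixes z0 B E :: real
  assumes E: "E > 0" and h: "(z0+B)^2 < E^2"
  shows "\<bar>z0\<bar> < E + \<bar>B\<bar>" "\<bar>B\<bar> - E < \<bar>z0\<bar>"
proof -
  have a: "\<bar>z0+B\<bar> < E" using sq_lt[of E "z0+B"] E h by simp
  have "\<bar>z0\<bar> \<le> \<bar>z0+B\<bar> + \<bar>B\<bar>" using abs_triangle_ineq4[of "z0+B" B] by simp
  then show "\<bar>z0\<bar> < E + \<bar>B\<bar>" using a by linarith
  have "\<bar>B\<bar> \<le> \<bar>z0+B\<bar> + \<bar>z0\<bar>" using abs_triangle_ineq4[of "z0+B" z0] by simp
  then show "\<bar>B\<bar> - E < \<bar>z0\<bar>" using a by linarith
qed

lemma z_make:
  fixes \<zeta> B E :: real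
  assumes E: "E > 0" and p: "\<zeta> > 0" and l: "\<bar>B\<bar> - E < \<zeta>" and u: "\<zeta> < \<bar>B\<bar> + E"
  shows "\<exists>z0. z0 \<noteq> 0 \<and> z0^2 = \<zeta>^2 \<and> \<bar>z0\<bar> = \<zeta> \<and> (z0+B)^2 < E^2"
proof -
  define z0 where "z0 = (if B \<ge> 0 then - \<zeta> else \<zeta>)"
  have "\<bar>z0 + B\<bar> = \<bar>\<bar>B\<bar> - \<zeta>\<bar>" by (simp add: z0_def abs_if)
  also have "\<dots> < E" using l u by simp
  finally have "(z0+B)^2 < E^2" using sq_lt[of E "z0+B"] E by simp
  then show ?thesis using p by (intro exI[of _ z0]) (simp add: z0_def)
qed

lemma sq_bound: fixes x y :: real shows "0 \<le> x \<Longrightarrow> x < y \<Longrightarrow> x^2 < y^2"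
  by (simp add: power_strict_mono)

lemma sq_bound': fixes x y :: real shows "0 \<le> x \<Longrightarrow> 0 \<le> y \<Longrightarrow> x^2 < y^2 \<Longrightarrow> x < y"
  using power2_less_imp_less by blast

definition Tset :: "real \<Rightarrow> real \<Rightarrow> real \<Rightarrow> real \<Rightarrow> real set" where
  "Tset A B E c = {2 * pi * A * E * \<bar>of_int l\<bar> / \<bar>z0\<bar> | l z0.
      l \<noteq> 0 \<and> z0 \<noteq> 0 \<and> (z0+B)^2 < E^2 \<and> c = pi * A * of_int l * (1 + (E^2 - B^2) / z0^2)}"

lemma T_gt:
  fixes A B E c :: real
  assumes A: "A > 0" and E: "E > 0" and EB: "E > \<bar>B\<bar>"
  shows "Tset A B E c = {sqrt (4 * pi * A * of_int l * (c - pi * A * of_int l)) / sqrt (1 - B\<^sup>2 / E\<^sup>2) | l :: int.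
             l \<noteq> 0 \<and> 2 * E / (E + \<bar>B\<bar>) < c / (pi * A * of_int l)}"
proof -
  define \<beta> where "\<beta> = \<bar>B\<bar>"
  have b0: "\<beta> \<ge> 0" by (simp add: \<beta>_def)
  have B2: "B^2 = \<beta>^2" by (simp add: \<beta>_def)
  have Eb: "E > \<beta>" using EB by (simp add: \<beta>_def)
  have Ebp: "E + \<beta> > 0" using Eb b0 by simp
  have D: "E^2 - \<beta>^2 = (E - \<beta>) * (E + \<beta>)" by (simp add: power2_eq_square algebra_simps)
  have Dp: "E^2 - \<beta>^2 > 0" unfolding D using Eb Ebp by simp
  have two: "2 * E / (E + \<beta>) = 1 + (E - \<beta>) / (E + \<beta>)" using Ebp by (simp add: field_simps)
  have r: "(E^2 - \<beta>^2) / (E + \<beta>)^2 = (E - \<beta>) / (E + \<beta>)" unfolding D using Ebp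
    by (simp add: power2_eq_square)
  show ?thesis unfolding Tset_def \<beta>_def[symmetric]
  proof (intro equalityI subsetI)
    fix x assume "x \<in> {2 * pi * A * E * \<bar>of_int l\<bar> / \<bar>z0\<bar> | l z0.
      l \<noteq> 0 \<and> z0 \<noteq> 0 \<and> (z0+B)^2 < E^2 \<and> c = pi * A * of_int l * (1 + (E^2 - B^2) / z0^2)}"
    then obtain l z0 where x: "x = 2 * pi * A * E * \<bar>of_int l\<bar> / \<bar>z0\<bar>" and l: "l \<noteq> 0" and z: "z0 \<noteq> 0"
      and h: "(z0+B)^2 < E^2" and c: "c = pi * A * of_int l * (1 + (E^2 - B^2) / z0^2)" by blast
    have q: "c / (pi * A * of_int l) = 1 + (E^2 - \<beta>^2) / z0^2" unfolding c B2 using A l by simp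
    have "\<bar>z0\<bar> < E + \<beta>" using z_bounds(1)[OF E h] by (simp add: \<beta>_def)
    then have "z0^2 < (E + \<beta>)^2" using sq_bound[of "\<bar>z0\<bar>" "E + \<beta>"] by simp
    then have "(E^2 - \<beta>^2) / (E + \<beta>)^2 < (E^2 - \<beta>^2) / z0^2"
      using Dp z Ebp by (intro divide_strict_left_mono) auto
    then have "2 * E / (E + \<beta>) < c / (pi * A * of_int l)" unfolding q two r[symmetric] by simp
    moreover have "x = sqrt (4 * pi * A * of_int l * (c - pi * A * of_int l)) / sqrt (1 - B\<^sup>2 / E\<^sup>2)"
      unfolding x using val_gt[OF A E z EB c] .
    ultimately show "x \<in> {sqrt (4 * pi * A * of_int l * (c - pi * A * of_int l)) / sqrt (1 - B\<^sup>2 / E\<^sup>2) | l :: int.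
             l \<noteq> 0 \<and> 2 * E / (E + \<beta>) < c / (pi * A * of_int l)}" using l by blast
  next
    fix x assume "x \<in> {sqrt (4 * pi * A * of_int l * (c - pi * A * of_int l)) / sqrt (1 - B\<^sup>2 / E\<^sup>2) | l :: int.
             l \<noteq> 0 \<and> 2 * E / (E + \<beta>) < c / (pi * A * of_int l)}"
    then obtain l :: int where x: "x = sqrt (4 * pi * A * of_int l * (c - pi * A * of_int l)) / sqrt (1 - B\<^sup>2 / E\<^sup>2)"
      and l: "l \<noteq> 0" and hq: "2 * E / (E + \<beta>) < c / (pi * A * of_int l)" by blast
    define t where "t = c / (pi * A * of_int l) - 1"
    have tgt: "(E - \<beta>) / (E + \<beta>) < t" using hq unfolding t_def two by simp
    have "(E - \<beta>) / (E + \<beta>) > 0" using Eb Ebp by simp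
    then have tp: "t > 0" using tgt by simp
    define \<zeta> where "\<zeta> = sqrt ((E^2 - \<beta>^2) / t)"
    have zp: "\<zeta> > 0" unfolding \<zeta>_def using Dp tp by simp
    have z2: "\<zeta>^2 = (E^2 - \<beta>^2) / t" unfolding \<zeta>_def using Dp tp by simp
    have "E - \<beta> < t * (E + \<beta>)" using tgt Ebp by (simp add: pos_divide_less_eq)
    then have "(E - \<beta>) * (E + \<beta>) < t * (E + \<beta>) * (E + \<beta>)" using Ebp by (intro mult_strict_right_mono) auto
    then have "E^2 - \<beta>^2 < t * (E + \<beta>)^2" unfolding D by (simp add: power2_eq_square algebra_simps)
    then have "\<zeta>^2 < (E + \<beta>)^2" unfolding z2 using tp by (simp add: pos_divide_less_eq algebra_simps)
    then have zu: "\<zeta> < \<bar>B\<bar> + E" using sq_bound'[of \<zeta> "E + \<beta>"] zp Ebp by (simp add: \<beta>_def)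
    have zl: "\<bar>B\<bar> - E < \<zeta>" using Eb zp by (simp add: \<beta>_def)
    obtain z0 where z: "z0 \<noteq> 0" and z02: "z0^2 = \<zeta>^2" and h: "(z0+B)^2 < E^2"
      using z_make[OF E zp zl zu] by blast
    have "(E^2 - B^2) / z0^2 = t" unfolding z02 z2 B2 using Dp tp by simp
    then have c: "c = pi * A * of_int l * (1 + (E^2 - B^2) / z0^2)" using A l by (simp add: t_def)
    have "x = 2 * pi * A * E * \<bar>of_int l\<bar> / \<bar>z0\<bar>" unfolding x using val_gt[OF A E z EB c] by simp
    then show "x \<in> {2 * pi * A * E * \<bar>of_int l\<bar> / \<bar>z0\<bar> | l z0.
      l \<noteq> 0 \<and> z0 \<noteq> 0 \<and> (z0+B)^2 < E^2 \<and> c = pi * A * of_int l * (1 + (E^2 - B^2) / z0^2)}"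
      using l z h c by blast
  qed
qed

lemma T_lt:
  fixes A B E c :: real
  assumes A: "A > 0" and E: "E > 0" and EB: "E < \<bar>B\<bar>"
  shows "Tset A B E c = {sqrt (4 * pi * A * of_int l * (pi * A * of_int l - c)) / sqrt (B\<^sup>2 / E\<^sup>2 - 1) | l :: int.
             l \<noteq> 0 \<and> 2 * E / (E - \<bar>B\<bar>) < c / (pi * A * of_int l) \<and>
             c / (pi * A * of_int l) < 2 * E / (E + \<bar>B\<bar>)}"
proof -
  define \<beta> where "\<beta> = \<bar>B\<bar>"
  have B2: "B^2 = \<beta>^2" by (simp add: \<beta>_def)
  have Eb: "E < \<beta>" using EB by (simp add: \<beta>_def)
  have bm: "\<beta> - E > 0" and bp: "\<beta> + E > 0" using Eb E by simp_all
  have D: "\<beta>^2 - E^2 = (\<beta> - E) * (\<beta> + E)" by (simp add: power2_eq_square algebra_simps)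
  have Dp: "\<beta>^2 - E^2 > 0" unfolding D using bm bp by simp
  have two1: "2 * E / (E + \<beta>) = 1 - (\<beta> - E) / (\<beta> + E)" using bp by (simp add: field_simps)
  have two2: "2 * E / (E - \<beta>) = 1 - (\<beta> + E) / (\<beta> - E)" using bm by (simp add: field_simps)
  have r1: "(\<beta>^2 - E^2) / (\<beta> + E)^2 = (\<beta> - E) / (\<beta> + E)" unfolding D using bp
    by (simp add: power2_eq_square)
  have r2: "(\<beta>^2 - E^2) / (\<beta> - E)^2 = (\<beta> + E) / (\<beta> - E)" unfolding D using bm
    by (simp add: power2_eq_square)
  have neg: "(E^2 - \<beta>^2) / z = - ((\<beta>^2 - E^2) / z)" for z :: real by (metis minus_diff_eq minus_divide_left)
  show ?thesis unfolding Tset_def \<beta>_def[symmetric]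
  proof (intro equalityI subsetI)
    fix x assume "x \<in> {2 * pi * A * E * \<bar>of_int l\<bar> / \<bar>z0\<bar> | l z0.
      l \<noteq> 0 \<and> z0 \<noteq> 0 \<and> (z0+B)^2 < E^2 \<and> c = pi * A * of_int l * (1 + (E^2 - B^2) / z0^2)}"
    then obtain l z0 where x: "x = 2 * pi * A * E * \<bar>of_int l\<bar> / \<bar>z0\<bar>" and l: "l \<noteq> 0" and z: "z0 \<noteq> 0"
      and h: "(z0+B)^2 < E^2" and c: "c = pi * A * of_int l * (1 + (E^2 - B^2) / z0^2)" by blast
    have q: "c / (pi * A * of_int l) = 1 - (\<beta>^2 - E^2) / z0^2" unfolding c B2 neg using A l by simp
    have "\<bar>z0\<bar> < E + \<beta>" using z_bounds(1)[OF E h] by (simp add: \<beta>_def)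
    then have u: "z0^2 < (\<beta> + E)^2" using sq_bound[of "\<bar>z0\<bar>" "E + \<beta>"] by (simp add: add.commute)
    have "\<beta> - E < \<bar>z0\<bar>" using z_bounds(2)[OF E h] by (simp add: \<beta>_def)
    then have lo: "(\<beta> - E)^2 < z0^2" using sq_bound[of "\<beta> - E" "\<bar>z0\<bar>"] bm by simp
    have "(\<beta>^2 - E^2) / (\<beta> + E)^2 < (\<beta>^2 - E^2) / z0^2"
      using Dp z u bp by (intro divide_strict_left_mono) auto
    then have 1: "c / (pi * A * of_int l) < 2 * E / (E + \<beta>)" unfolding q two1 r1[symmetric] by simp
    have "(\<beta>^2 - E^2) / z0^2 < (\<beta>^2 - E^2) / (\<beta> - E)^2"
      using Dp z lo bm by (intro divide_strict_left_mono) auto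
    then have 2: "2 * E / (E - \<beta>) < c / (pi * A * of_int l)" unfolding q two2 r2[symmetric] by simp
    have Eb': "E < \<bar>B\<bar>" using Eb by (simp add: \<beta>_def)
    have "x = sqrt (4 * pi * A * of_int l * (pi * A * of_int l - c)) / sqrt (B\<^sup>2 / E\<^sup>2 - 1)"
      unfolding x using val_lt[OF A E z Eb' c] .
    then show "x \<in> {sqrt (4 * pi * A * of_int l * (pi * A * of_int l - c)) / sqrt (B\<^sup>2 / E\<^sup>2 - 1) | l :: int.
             l \<noteq> 0 \<and> 2 * E / (E - \<beta>) < c / (pi * A * of_int l) \<and>
             c / (pi * A * of_int l) < 2 * E / (E + \<beta>)}" using l 1 2 by blast
  next
    fix x assume "x \<in> {sqrt (4 * pi * A * of_int l * (pi * A * of_int l - c)) / sqrt (B\<^sup>2 / E\<^sup>2 - 1) | l :: int.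
             l \<noteq> 0 \<and> 2 * E / (E - \<beta>) < c / (pi * A * of_int l) \<and>
             c / (pi * A * of_int l) < 2 * E / (E + \<beta>)}"
    then obtain l :: int where x: "x = sqrt (4 * pi * A * of_int l * (pi * A * of_int l - c)) / sqrt (B\<^sup>2 / E\<^sup>2 - 1)"
      and l: "l \<noteq> 0" and h1: "2 * E / (E - \<beta>) < c / (pi * A * of_int l)"
      and h2: "c / (pi * A * of_int l) < 2 * E / (E + \<beta>)" by blast
    define t where "t = 1 - c / (pi * A * of_int l)"
    have t1: "(\<beta> - E) / (\<beta> + E) < t" using h2 unfolding t_def two1 by simp
    have t2: "t < (\<beta> + E) / (\<beta> - E)" using h1 unfolding t_def two2 by simp
    have "(\<beta> - E) / (\<beta> + E) > 0" using bm bp by simp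
    then have tp: "t > 0" using t1 by simp
    define \<zeta> where "\<zeta> = sqrt ((\<beta>^2 - E^2) / t)"
    have zp: "\<zeta> > 0" unfolding \<zeta>_def using Dp tp by simp
    have z2: "\<zeta>^2 = (\<beta>^2 - E^2) / t" unfolding \<zeta>_def using Dp tp by simp
    have "\<beta> - E < t * (\<beta> + E)" using t1 bp by (simp add: pos_divide_less_eq)
    then have "(\<beta> - E) * (\<beta> + E) < t * (\<beta> + E) * (\<beta> + E)" using bp by (intro mult_strict_right_mono) auto
    then have "\<beta>^2 - E^2 < t * (\<beta> + E)^2" unfolding D by (simp add: power2_eq_square algebra_simps)
    then have "\<zeta>^2 < (\<beta> + E)^2" unfolding z2 using tp by (simp add: pos_divide_less_eq algebra_simps)
    then have zu: "\<zeta> < \<bar>B\<bar> + E" using sq_bound'[of \<zeta> "\<beta> + E"] zp bp by (simp add: \<beta>_def)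
    have "t * (\<beta> - E) < \<beta> + E" using t2 bm by (simp add: pos_less_divide_eq)
    then have "t * (\<beta> - E) * (\<beta> - E) < (\<beta> + E) * (\<beta> - E)" using bm by (intro mult_strict_right_mono) auto
    then have "t * (\<beta> - E)^2 < \<beta>^2 - E^2" unfolding D by (simp add: power2_eq_square algebra_simps)
    then have "(\<beta> - E)^2 < \<zeta>^2" unfolding z2 using tp by (simp add: pos_less_divide_eq algebra_simps)
    then have zl: "\<bar>B\<bar> - E < \<zeta>" using sq_bound'[of "\<beta> - E" \<zeta>] zp bm by (simp add: \<beta>_def)
    obtain z0 where z: "z0 \<noteq> 0" and z02: "z0^2 = \<zeta>^2" and h: "(z0+B)^2 < E^2"
      using z_make[OF E zp zl zu] by blast
    have "(E^2 - B^2) / z0^2 = - t" unfolding z02 z2 B2 neg using Dp tp by simp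
    then have c: "c = pi * A * of_int l * (1 + (E^2 - B^2) / z0^2)" using A l by (simp add: t_def)
    have Eb': "E < \<bar>B\<bar>" using Eb by (simp add: \<beta>_def)
    have "x = 2 * pi * A * E * \<bar>of_int l\<bar> / \<bar>z0\<bar>" unfolding x using val_lt[OF A E z Eb' c] by simp
    then show "x \<in> {2 * pi * A * E * \<bar>of_int l\<bar> / \<bar>z0\<bar> | l z0.
      l \<noteq> 0 \<and> z0 \<noteq> 0 \<and> (z0+B)^2 < E^2 \<and> c = pi * A * of_int l * (1 + (E^2 - B^2) / z0^2)}"
      using l z h c by blast
  qed
qed

lemma T_eq:
  fixes A B E c :: real
  assumes A: "A > 0" and E: "E > 0" and EB: "E = \<bar>B\<bar>" and c0: "c \<noteq> 0"
  shows "Tset A B E c = (if c / (pi * A) \<in> \<int> then {2 * E * \<bar>c\<bar> / \<bar>z0\<bar> | z0 :: real. (z0 + B)\<^sup>2 < E\<^sup>2} else {})"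
proof -
  have D: "E^2 - B^2 = 0" using EB by simp
  show ?thesis unfolding Tset_def D
  proof (intro equalityI subsetI)
    fix x assume "x \<in> {2 * pi * A * E * \<bar>of_int l\<bar> / \<bar>z0\<bar> | l z0.
      l \<noteq> 0 \<and> z0 \<noteq> 0 \<and> (z0+B)^2 < E^2 \<and> c = pi * A * of_int l * (1 + 0 / z0^2)}"
    then obtain l z0 where x: "x = 2 * pi * A * E * \<bar>of_int l\<bar> / \<bar>z0\<bar>" and l: "l \<noteq> 0" and z: "z0 \<noteq> 0"
      and h: "(z0+B)^2 < E^2" and c: "c = pi * A * of_int l * (1 + 0 / z0^2)" by blast
    have c': "c = pi * A * of_int l" using c by simp
    have "c / (pi * A) = of_int l" unfolding c' using A by simp
    then have int: "c / (pi * A) \<in> \<int>" by simp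
    have "x = 2 * E * \<bar>c\<bar> / \<bar>z0\<bar>" unfolding x c' using A by (simp add: abs_mult)
    then show "x \<in> (if c / (pi * A) \<in> \<int> then {2 * E * \<bar>c\<bar> / \<bar>z0\<bar> | z0 :: real. (z0 + B)\<^sup>2 < E\<^sup>2} else {})"
      using int h by auto
  next
    fix x assume xin: "x \<in> (if c / (pi * A) \<in> \<int> then {2 * E * \<bar>c\<bar> / \<bar>z0\<bar> | z0 :: real. (z0 + B)\<^sup>2 < E\<^sup>2} else {})"
    then have int: "c / (pi * A) \<in> \<int>" by (auto split: if_splits)
    then obtain l :: int where lq: "c / (pi * A) = of_int l" by (auto elim: Ints_cases)
    have c': "c = pi * A * of_int l" using lq A by (simp add: field_simps)
    have l: "l \<noteq> 0" using c' c0 by auto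
    obtain z0 where x: "x = 2 * E * \<bar>c\<bar> / \<bar>z0\<bar>" and h: "(z0 + B)\<^sup>2 < E\<^sup>2" using xin int by auto
    have z: "z0 \<noteq> 0" using h EB by auto
    have "x = 2 * pi * A * E * \<bar>of_int l\<bar> / \<bar>z0\<bar>" unfolding x c' using A by (simp add: abs_mult)
    then show "x \<in> {2 * pi * A * E * \<bar>of_int l\<bar> / \<bar>z0\<bar> | l z0.
      l \<noteq> 0 \<and> z0 \<noteq> 0 \<and> (z0+B)^2 < E^2 \<and> c = pi * A * of_int l * (1 + 0 / z0^2)}"
      using l z h c' by auto
  qed
qed

theorem theorem4p9:
  fixes A B E a b c :: real and \<Gamma> :: "heis set"
  assumes hA: "A > 0" and hE: "E > 0"
    and h\<Gamma>: "cocompact_discrete_subgroup \<Gamma>"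
    and h\<gamma>: "(a, b, c) \<in> \<Gamma>"
  shows
   "((a, b, c) = hunit \<longrightarrow>
       (E \<ge> \<bar>B\<bar> \<longrightarrow> Lset A B (a, b, c) E = {}) \<and>
       (E < \<bar>B\<bar> \<longrightarrow> Lset A B (a, b, c) E = {2 * pi * A / sqrt (B\<^sup>2 / E\<^sup>2 - 1)})) \<and>
    ((a, b) \<noteq> (0, 0) \<longrightarrow>
       (E \<le> \<bar>B\<bar> \<longrightarrow> Lset A B (a, b, c) E = {}) \<and>
       (E > \<bar>B\<bar> \<longrightarrow> Lset A B (a, b, c) E =
          {sqrt (A * (a\<^sup>2 + b\<^sup>2)) / sqrt (1 - B\<^sup>2 / E\<^sup>2)})) \<and>
    ((a, b) = (0, 0) \<and> c \<noteq> 0 \<longrightarrow>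
       (E > \<bar>B\<bar> \<longrightarrow> Lset A B (a, b, c) E =
          {sqrt (4 * pi * A * of_int l * (c - pi * A * of_int l)) / sqrt (1 - B\<^sup>2 / E\<^sup>2) | l :: int.
             l \<noteq> 0 \<and> 2 * E / (E + \<bar>B\<bar>) < c / (pi * A * of_int l)} \<union> {\<bar>c\<bar>}) \<and>
       (E < \<bar>B\<bar> \<longrightarrow> Lset A B (a, b, c) E =
          {sqrt (4 * pi * A * of_int l * (pi * A * of_int l - c)) / sqrt (B\<^sup>2 / E\<^sup>2 - 1) | l :: int.
             l \<noteq> 0 \<and> 2 * E / (E - \<bar>B\<bar>) < c / (pi * A * of_int l) \<and>
             c / (pi * A * of_int l) < 2 * E / (E + \<bar>B\<bar>)} \<union> {\<bar>c\<bar>}) \<and>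
       (E = \<bar>B\<bar> \<longrightarrow> Lset A B (a, b, c) E =
          (if c / (pi * A) \<in> \<int> then {2 * E * \<bar>c\<bar> / \<bar>z0\<bar> | z0 :: real. (z0 + B)\<^sup>2 < E\<^sup>2} else {})
          \<union> {\<bar>c\<bar>}))"
proof -
  have U: "Lset A B hunit E = (if E < \<bar>B\<bar> then {2 * pi * A / sqrt (B\<^sup>2 / E\<^sup>2 - 1)} else {})"
    by (rule Lset_unit[OF hA hE])
  have V: "(a,b) \<noteq> (0,0) \<Longrightarrow> Lset A B (a,b,c) E =
      (if E > \<bar>B\<bar> then {sqrt (A * (a\<^sup>2 + b\<^sup>2)) / sqrt (1 - B\<^sup>2 / E\<^sup>2)} else {})"
    by (rule Lset_V[OF hA hE])
  have C: "Lset A B (a,b,c) E = Tset A B E c \<union> {\<bar>c\<bar>}" if "(a,b) = (0,0) \<and> c \<noteq> 0"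
  proof -
    have "a = 0" "b = 0" "c \<noteq> 0" using that by auto
    then show ?thesis using Lset_central[OF hA hE `c \<noteq> 0`, of B] unfolding Tset_def by auto
  qed
  show ?thesis
  proof (intro conjI impI)
    assume "(a,b,c) = hunit" and "E \<ge> \<bar>B\<bar>"
    then show "Lset A B (a,b,c) E = {}" using U by simp
  next
    assume "(a,b,c) = hunit" and "E < \<bar>B\<bar>"
    then show "Lset A B (a,b,c) E = {2 * pi * A / sqrt (B\<^sup>2 / E\<^sup>2 - 1)}" using U by simp
  next
    assume "(a,b) \<noteq> (0,0)" and "E \<le> \<bar>B\<bar>"
    then show "Lset A B (a,b,c) E = {}" using V by simp
  next
    assume "(a,b) \<noteq> (0,0)" and "E > \<bar>B\<bar>"
    then show "Lset A B (a,b,c) E = {sqrt (A * (a\<^sup>2 + b\<^sup>2)) / sqrt (1 - B\<^sup>2 / E\<^sup>2)}" using V by simp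
  next
    assume h: "(a,b) = (0,0) \<and> c \<noteq> 0" and EB: "E > \<bar>B\<bar>"
    show "Lset A B (a, b, c) E =
          {sqrt (4 * pi * A * of_int l * (c - pi * A * of_int l)) / sqrt (1 - B\<^sup>2 / E\<^sup>2) | l :: int.
             l \<noteq> 0 \<and> 2 * E / (E + \<bar>B\<bar>) < c / (pi * A * of_int l)} \<union> {\<bar>c\<bar>}"
      unfolding C[OF h] T_gt[OF hA hE EB] ..
  next
    assume h: "(a,b) = (0,0) \<and> c \<noteq> 0" and EB: "E < \<bar>B\<bar>"
    show "Lset A B (a, b, c) E =
          {sqrt (4 * pi * A * of_int l * (pi * A * of_int l - c)) / sqrt (B\<^sup>2 / E\<^sup>2 - 1) | l :: int.
             l \<noteq> 0 \<and> 2 * E / (E - \<bar>B\<bar>) < c / (pi * A * of_int l) \<and>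
             c / (pi * A * of_int l) < 2 * E / (E + \<bar>B\<bar>)} \<union> {\<bar>c\<bar>}"
      unfolding C[OF h] T_lt[OF hA hE EB] ..
  next
    assume h: "(a,b) = (0,0) \<and> c \<noteq> 0" and EB: "E = \<bar>B\<bar>"
    have c0: "c \<noteq> 0" using h by simp
    show "Lset A B (a, b, c) E =
          (if c / (pi * A) \<in> \<int> then {2 * E * \<bar>c\<bar> / \<bar>z0\<bar> | z0 :: real. (z0 + B)\<^sup>2 < E\<^sup>2} else {})
          \<union> {\<bar>c\<bar>}"
      unfolding C[OF h] T_eq[OF hA hE EB c0] ..
  qed
qed

end
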